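(* Consider the two-route traffic model described in the context, under the assumptions (A1)–(A5) listed there. Let $P:=\{x\in\Omega:\ 0\le x_1\le C_1,\ 0\le x_2\le C_2\}$. Then: (i) $P$ is positively invariant, i.e., every solution $x(t)$ of the system with $x(0)\in P$ satisfies $x(t)\in P$ for all $t\ge 0$; (ii) $P$ is globally attractive, i.e., for every open neighbourhood $U$ of $P$ and every initial condition $x_0\in\Omega$ there exists $\tau(x_0)>0$ such that the solution starting at $x_0$ lies in $U$ for all $t>\tau(x_0)$.
   Context: Two routes $i=1,2$ connect an origin to a destination. For each route there are positive parameters $B_i$ (jam density), $C_i$ (critical density), $F_i$ (maximum capacity) with $C_i<B_i$; the traffic demand is a constant $\phi>0$. Set $v_i=F_i/C_i$. The state is $x=(x_1,x_2)\in\Omega:=[0,B_1]\times[0,B_2]$ and evolves by $\dot x_i=\min\{\phi R_i(x),S_i(x_i)\}-D_i(x_i)$, $i=1,2$, where the supply is $S_i(x_i)=F_i$ if $x_i<C_i$ and $S_i(x_i)=\frac{F_i}{B_i-C_i}(B_i-x_i)$ otherwise, and the demand is $D_i(x_i)=v_ix_i$ if $x_i<C_i$ and $D_i(x_i)=F_i$ otherwise. The routing ratios are $R_i(x)=(1-\alpha)r_i^0+\alpha\, r_i(\tau(x))$, where $\alpha\in(0,1]$ (penetration rate), $r_1^0,r_2^0\ge 0$ are constants with $r_1^0+r_2^0=1$, $\tau(x)=(\tau_1(x_1),\tau_2(x_2))$ with each travel time $\tau_i$ a $C^1$ strictly increasing function, and the functions $r_i$ satisfy $0\le r_i(\tau(x))\le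 1$, $r_1(\tau(x))+r_2(\tau(x))=1$ for all $x\in\Omega$, and $x\mapsto r_i(\tau(x))$ is globally Lipschitz and $C^1$ on $\Omega$. Assumptions: (A1) $\phi<F_1+F_2$; (A2)–(A3) the properties of $\tau_i$, $r_i$ just listed; (A4) the routing ratios are strictly monotone: $\partial R_i/\partial \tau_j>0$ for $i\neq j$; (A5) $F_i>(1-\alpha)\phi r_i^0$ for $i=1,2$. *)

theory Defs
  imports "HOL-Analysis.Analysis"
begin

definition supply_fn :: "real \<Rightarrow> real \<Rightarrow> real \<Rightarrow> real \<Rightarrow> real" where
  "supply_fn B C F s = (if s < C then F else F / (B - C) * (B - s))"

definition demand_fn :: "real \<Rightarrow> real \<Rightarrow> real \<Rightarrow> real" where
  "demand_fn C F s = (if s < C then (F / C) * s else F)"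

definition C1_on_state :: "(real \<times> real) set \<Rightarrow> (real \<times> real \<Rightarrow> real) \<Rightarrow> bool" where
  "C1_on_state S f \<longleftrightarrow> (\<exists>g1 g2. continuous_on S g1 \<and> continuous_on S g2 \<and>
     (\<forall>x\<in>S. (f has_derivative (\<lambda>h. g1 x * fst h + g2 x * snd h)) (at x within S)))"

definition C1_strict_incr_on :: "real set \<Rightarrow> (real \<Rightarrow> real) \<Rightarrow> bool" where
  "C1_strict_incr_on I f \<longleftrightarrow> strict_mono_on I f \<and>
     (\<exists>f'. continuous_on I f' \<and> (\<forall>s\<in>I. (f has_real_derivative f' s) (at s within I)))"

definition traffic_field ::
  "real \<Rightarrow> real \<Rightarrow> real \<Rightarrow> real \<Rightarrow> real \<Rightarrow> real \<Rightarrow> real \<Rightarrow> real \<Rightarrow> real \<Rightarrow> real \<Rightarrow>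
   (real \<Rightarrow> real) \<Rightarrow> (real \<Rightarrow> real) \<Rightarrow> (real \<Rightarrow> real \<Rightarrow> real) \<Rightarrow> (real \<Rightarrow> real \<Rightarrow> real) \<Rightarrow>
   real \<times> real \<Rightarrow> real \<times> real" where
  "traffic_field B1 B2 C1 C2 F1 F2 \<phi> \<alpha> r10 r20 \<tau>1 \<tau>2 r1 r2 x =
     (let R1 = (1 - \<alpha>) * r10 + \<alpha> * r1 (\<tau>1 (fst x)) (\<tau>2 (snd x));
          R2 = (1 - \<alpha>) * r20 + \<alpha> * r2 (\<tau>1 (fst x)) (\<tau>2 (snd x))
      in (min (\<phi> * R1) (supply_fn B1 C1 F1 (fst x)) - demand_fn C1 F1 (fst x),
          min (\<phi> * R2) (supply_fn B2 C2 F2 (snd x)) - demand_fn C2 F2 (snd x)))"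

definition is_solution :: "(real \<times> real \<Rightarrow> real \<times> real) \<Rightarrow> (real \<times> real) set \<Rightarrow>
    (real \<Rightarrow> real \<times> real) \<Rightarrow> bool" where
  "is_solution f \<Omega> x \<longleftrightarrow> (\<forall>t\<ge>0. x t \<in> \<Omega> \<and>
      (x has_vector_derivative f (x t)) (at t within {0..}))"

end

theory Submission
  imports Defs
begin

lemma decay_aux:
  fixes h h' :: "real \<Rightarrow> real" and m t :: real
  assumes der: "\<And>t. t \<ge> 0 \<Longrightarrow> (h has_real_derivative h' t) (at t within {0..})"
    and neg: "\<And>t. t \<ge> 0 \<Longrightarrow> h t > m \<Longrightarrow> h' t \<le> 0"
    and h0: "h 0 \<le> m" and t: "t \<ge> 0"
  shows "h t \<le> m"
proof (rule ccontr)
  assume ht: "\<not> h t \<le> m"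
  have cont: "continuous_on {0..} h" using der by (intro DERIV_continuous_on) auto
  define S where "S = {0..t} \<inter> h -` {..m}"
  have clS: "closed S" unfolding S_def
    by (rule continuous_closed_preimage) (use cont t in \<open>auto intro: continuous_on_subset\<close>)
  have "0 \<in> S" using h0 t by (auto simp: S_def)
  have bdd: "bdd_above S" by (auto simp: S_def bdd_above_def)
  define s where "s = Sup S"
  have sS: "s \<in> S" unfolding s_def using closed_contains_Sup[OF _ bdd clS] \<open>0 \<in> S\<close> by auto
  have s0: "s \<ge> 0" using cSup_upper[OF \<open>0 \<in> S\<close> bdd] s_def by simp
  have st: "s < t"
  proof -
    have "s \<le> t" "h s \<le> m" using sS by (auto simp: S_def)
    moreover have "s \<noteq> t" using \<open>h s \<le> m\<close> ht by auto
    ultimately show ?thesis by simp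
  qed
  have gt: "h u > m" if "s < u" "u \<le> t" for u
  proof (rule ccontr)
    assume "\<not> h u > m"
    then have "u \<in> S" using that s0 by (auto simp: S_def)
    then have "u \<le> s" using cSup_upper[OF _ bdd] s_def by simp
    then show False using that by simp
  qed
  have "h t \<le> h s"
  proof (rule DERIV_nonpos_imp_decreasing_open[of s t])
    show "s \<le> t" using st by simp
    show "continuous_on {s..t} h" using cont s0 by (auto intro: continuous_on_subset)
    fix u assume u: "s < u" "u < t"
    have "u \<in> interior {0..}" using u s0 by simp
    then have "(h has_real_derivative h' u) (at u)"
      using der[of u] u s0 at_within_interior by fastforce
    then show "\<exists>y. (h has_real_derivative y) (at u) \<and> y \<le> 0"
      using neg[of u] gt[of u] u s0 by auto
  qed
  then show False using sS ht by (auto simp: S_def)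
qed

lemma comp_decay:
  fixes g G :: "real \<Rightarrow> real" and k t :: real
  assumes k: "k > 0"
    and der: "\<And>t. t \<ge> 0 \<Longrightarrow> (g has_real_derivative G t) (at t within {0..})"
    and neg: "\<And>t. t \<ge> 0 \<Longrightarrow> g t > 0 \<Longrightarrow> G t \<le> - k * g t"
    and t: "t \<ge> 0"
  shows "g t \<le> max (g 0) 0 * exp (- k * t)"
proof -
  define h where "h = (\<lambda>t. g t * exp (k * t))"
  define h' where "h' = (\<lambda>t. G t * exp (k * t) + g t * (k * exp (k * t)))"
  have hd: "(h has_real_derivative h' t) (at t within {0..})" if "t \<ge> 0" for t
    unfolding h_def h'_def
    by (auto intro!: derivative_eq_intros der that)
  have hn: "h' t \<le> 0" if "t \<ge> 0" "h t > max (g 0) 0" for t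
  proof -
    have "g t > 0" using that by (simp add: h_def zero_less_mult_iff)
    then have "G t + k * g t \<le> 0" using neg[OF that(1)] by simp
    then have "(G t + k * g t) * exp (k * t) \<le> 0" by (simp add: mult_nonpos_nonneg)
    then show ?thesis by (simp add: h'_def algebra_simps)
  qed
  have "h t \<le> max (g 0) 0"
    by (rule decay_aux[OF hd hn]) (auto simp: h_def t)
  then have A: "h t * exp (- k * t) \<le> max (g 0) 0 * exp (- k * t)"
    by (rule mult_right_mono) simp
  have "exp (k * t) * exp (- k * t) = 1" by (simp add: exp_minus[symmetric] exp_add[symmetric])
  then have B: "h t * exp (- k * t) = g t" unfolding h_def by (metis mult.assoc mult.right_neutral)
  show ?thesis using A unfolding B .
qed

lemma exp_small:
  fixes c k e :: real
  assumes "c > 0" "k > 0" "e > 0"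
  shows "\<exists>T>0. \<forall>t\<ge>T. c * exp (- k * t) < e"
proof (intro exI[of _ "max 1 (ln (c / e) / k + 1)"] conjI allI impI)
  fix t assume t: "max 1 (ln (c / e) / k + 1) \<le> t"
  then have "ln (c / e) / k < t" by linarith
  then have "ln (c / e) < k * t" using assms by (simp add: divide_less_eq mult.commute)
  then have "exp (- k * t) < exp (- ln (c / e))" by simp
  also have "\<dots> = e / c" using assms by (simp add: exp_minus)
  finally show "c * exp (- k * t) < e" using assms by (simp add: field_simps)
qed simp

lemma field_fst_bound:
  assumes "C1 < B1" "fst x > C1"
  shows "fst (traffic_field B1 B2 C1 C2 F1 F2 \<phi> \<alpha> r10 r20 \<tau>1 \<tau>2 r1 r2 x)
           \<le> - (F1 / (B1 - C1)) * (fst x - C1)"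
proof -
  have "fst (traffic_field B1 B2 C1 C2 F1 F2 \<phi> \<alpha> r10 r20 \<tau>1 \<tau>2 r1 r2 x)
      \<le> F1 / (B1 - C1) * (B1 - fst x) - F1"
    using assms by (simp add: traffic_field_def Let_def supply_fn_def demand_fn_def)
  also have "\<dots> = - (F1 / (B1 - C1)) * (fst x - C1)"
    using assms by (simp add: field_simps)
  finally show ?thesis .
qed

lemma field_snd_bound:
  assumes "C2 < B2" "snd x > C2"
  shows "snd (traffic_field B1 B2 C1 C2 F1 F2 \<phi> \<alpha> r10 r20 \<tau>1 \<tau>2 r1 r2 x)
           \<le> - (F2 / (B2 - C2)) * (snd x - C2)"
proof -
  have "snd (traffic_field B1 B2 C1 C2 F1 F2 \<phi> \<alpha> r10 r20 \<tau>1 \<tau>2 r1 r2 x)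
      \<le> F2 / (B2 - C2) * (B2 - snd x) - F2"
    using assms by (simp add: traffic_field_def Let_def supply_fn_def demand_fn_def)
  also have "\<dots> = - (F2 / (B2 - C2)) * (snd x - C2)"
    using assms by (simp add: field_simps)
  finally show ?thesis .
qed

lemma sol_fst_deriv:
  assumes "is_solution f \<Omega> x" "t \<ge> 0"
  shows "((\<lambda>t. fst (x t) - c) has_real_derivative fst (f (x t))) (at t within {0..})"
proof -
  have "(x has_vector_derivative f (x t)) (at t within {0..})"
    using assms by (auto simp: is_solution_def)
  from bounded_linear.has_vector_derivative[OF bounded_linear_fst this]
  have "((\<lambda>t. fst (x t)) has_real_derivative fst (f (x t))) (at t within {0..})"
    by (simp add: has_real_derivative_iff_has_vector_derivative o_def)
  then show ?thesis by (auto intro!: derivative_eq_intros)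
qed

lemma sol_snd_deriv:
  assumes "is_solution f \<Omega> x" "t \<ge> 0"
  shows "((\<lambda>t. snd (x t) - c) has_real_derivative snd (f (x t))) (at t within {0..})"
proof -
  have "(x has_vector_derivative f (x t)) (at t within {0..})"
    using assms by (auto simp: is_solution_def)
  from bounded_linear.has_vector_derivative[OF bounded_linear_snd this]
  have "((\<lambda>t. snd (x t)) has_real_derivative snd (f (x t))) (at t within {0..})"
    by (simp add: has_real_derivative_iff_has_vector_derivative o_def)
  then show ?thesis by (auto intro!: derivative_eq_intros)
qed

theorem lemma1:
  fixes B1 B2 C1 C2 F1 F2 \<phi> \<alpha> r10 r20 :: real
    and \<tau>1 \<tau>2 :: "real \<Rightarrow> real"
    and r1 r2 :: "real \<Rightarrow> real \<Rightarrow> real"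
  defines "\<Omega> \<equiv> {0..B1} \<times> {0..B2}"
    and "P \<equiv> {0..C1} \<times> {0..C2}"
    and "f \<equiv> traffic_field B1 B2 C1 C2 F1 F2 \<phi> \<alpha> r10 r20 \<tau>1 \<tau>2 r1 r2"
  assumes pos: "B1 > 0" "B2 > 0" "C1 > 0" "C2 > 0" "F1 > 0" "F2 > 0" "\<phi> > 0"
    and CB: "C1 < B1" "C2 < B2"
    and alpha: "0 < \<alpha>" "\<alpha> \<le> 1"
    and r0: "r10 \<ge> 0" "r20 \<ge> 0" "r10 + r20 = 1"
    and A1: "\<phi> < F1 + F2"
    and A2: "C1_strict_incr_on {0..B1} \<tau>1" "C1_strict_incr_on {0..B2} \<tau>2"
    and A3_range: "\<forall>x\<in>\<Omega>. 0 \<le> r1 (\<tau>1 (fst x)) (\<tau>2 (snd x)) \<and> r1 (\<tau>1 (fst x)) (\<tau>2 (snd x)) \<le> 1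
                        \<and> 0 \<le> r2 (\<tau>1 (fst x)) (\<tau>2 (snd x)) \<and> r2 (\<tau>1 (fst x)) (\<tau>2 (snd x)) \<le> 1"
    and A3_sum: "\<forall>x\<in>\<Omega>. r1 (\<tau>1 (fst x)) (\<tau>2 (snd x)) + r2 (\<tau>1 (fst x)) (\<tau>2 (snd x)) = 1"
    and A3_lip: "\<exists>L. L > 0 \<and> L-lipschitz_on \<Omega> (\<lambda>x. r1 (\<tau>1 (fst x)) (\<tau>2 (snd x)))"
                "\<exists>L. L > 0 \<and> L-lipschitz_on \<Omega> (\<lambda>x. r2 (\<tau>1 (fst x)) (\<tau>2 (snd x)))"
    and A3_C1: "C1_on_state \<Omega> (\<lambda>x. r1 (\<tau>1 (fst x)) (\<tau>2 (snd x)))"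
               "C1_on_state \<Omega> (\<lambda>x. r2 (\<tau>1 (fst x)) (\<tau>2 (snd x)))"
    and A4: "\<forall>x\<in>\<Omega>. \<exists>d>0. ((\<lambda>s. \<alpha> * r1 (\<tau>1 (fst x)) s) has_real_derivative d)
                              (at (\<tau>2 (snd x)) within \<tau>2 ` {0..B2})"
            "\<forall>x\<in>\<Omega>. \<exists>d>0. ((\<lambda>s. \<alpha> * r2 s (\<tau>2 (snd x))) has_real_derivative d)
                              (at (\<tau>1 (fst x)) within \<tau>1 ` {0..B1})"
    and A5: "F1 > (1 - \<alpha>) * \<phi> * r10" "F2 > (1 - \<alpha>) * \<phi> * r20"
  shows "(\<forall>x. is_solution f \<Omega> x \<longrightarrow> x 0 \<in> P \<longrightarrow> (\<forall>t\<ge>0. x t \<in> P))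
       \<and> (\<forall>U x0. open U \<longrightarrow> P \<subseteq> U \<longrightarrow> x0 \<in> \<Omega> \<longrightarrow>
            (\<exists>T>0. \<forall>x. is_solution f \<Omega> x \<longrightarrow> x 0 = x0 \<longrightarrow> (\<forall>t>T. x t \<in> U)))"
proof -
  define k1 where "k1 = F1 / (B1 - C1)"
  define k2 where "k2 = F2 / (B2 - C2)"
  have k1: "k1 > 0" and k2: "k2 > 0" using pos CB by (auto simp: k1_def k2_def)
  have key1: "fst (x t) - C1 \<le> max (fst (x 0) - C1) 0 * exp (- k1 * t)"
    if sol: "is_solution f \<Omega> x" and t: "t \<ge> 0" for x t
    using comp_decay[of k1 "\<lambda>t. fst (x t) - C1" "\<lambda>t. fst (f (x t))" t] k1 t
      sol_fst_deriv[OF sol] field_fst_bound[OF CB(1)] unfolding f_def k1_def by auto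
  have key2: "snd (x t) - C2 \<le> max (snd (x 0) - C2) 0 * exp (- k2 * t)"
    if sol: "is_solution f \<Omega> x" and t: "t \<ge> 0" for x t
    using comp_decay[of k2 "\<lambda>t. snd (x t) - C2" "\<lambda>t. snd (f (x t))" t] k2 t
      sol_snd_deriv[OF sol] field_snd_bound[OF CB(2)] unfolding f_def k2_def by auto
  have inO: "x t \<in> \<Omega>" if "is_solution f \<Omega> x" "t \<ge> 0" for x t
    using that by (auto simp: is_solution_def)
  show ?thesis
  proof (intro conjI allI impI)
    fix x t assume sol: "is_solution f \<Omega> x" and x0: "x 0 \<in> P" and t: "(t::real) \<ge> 0"
    have "fst (x 0) \<le> C1" "snd (x 0) \<le> C2" using x0 by (auto simp: P_def)
    then have "fst (x t) \<le> C1" "snd (x t) \<le> C2"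
      using key1[OF sol t] key2[OF sol t] by auto
    moreover have "fst (x t) \<ge> 0" "snd (x t) \<ge> 0" using inO[OF sol t] by (auto simp: \<Omega>_def)
    ultimately show "x t \<in> P" by (auto simp: P_def mem_Times_iff)
  next
    fix U x0 assume U: "open U" "P \<subseteq> U" and x0: "x0 \<in> \<Omega>"
    have "compact P" unfolding P_def by (intro compact_Times compact_Icc)
    then obtain e where e: "e > 0" "(\<Union>p\<in>P. ball p e) \<subseteq> U"
      using compact_subset_open_imp_ball_epsilon_subset U by metis
    obtain T1 where T1: "T1 > 0" "\<forall>t\<ge>T1. (B1 - C1) * exp (- k1 * t) < e / 2"
      using exp_small[of "B1 - C1" k1 "e/2"] CB k1 e by auto
    obtain T2 where T2: "T2 > 0" "\<forall>t\<ge>T2. (B2 - C2) * exp (- k2 * t) < e / 2"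
      using exp_small[of "B2 - C2" k2 "e/2"] CB k2 e by auto
    show "\<exists>T>0. \<forall>x. is_solution f \<Omega> x \<longrightarrow> x 0 = x0 \<longrightarrow> (\<forall>t>T. x t \<in> U)"
    proof (intro exI[of _ "max T1 T2"] conjI allI impI)
      show "max T1 T2 > 0" using T1 by simp
      fix x t assume sol: "is_solution f \<Omega> x" and xx0: "x 0 = x0" and t: "max T1 T2 < t"
      have t0: "t \<ge> 0" using t T1 by simp
      have m1: "max (fst (x 0) - C1) 0 \<le> B1 - C1" using x0 xx0 CB by (auto simp: \<Omega>_def)
      have m2: "max (snd (x 0) - C2) 0 \<le> B2 - C2" using x0 xx0 CB by (auto simp: \<Omega>_def)
      have "max (fst (x 0) - C1) 0 * exp (- k1 * t) \<le> (B1 - C1) * exp (- k1 * t)"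
        by (rule mult_right_mono[OF m1]) simp
      moreover have "(B1 - C1) * exp (- k1 * t) < e / 2" using T1(2) t by auto
      ultimately have a1: "fst (x t) - C1 < e / 2" using key1[OF sol t0] by linarith
      have "max (snd (x 0) - C2) 0 * exp (- k2 * t) \<le> (B2 - C2) * exp (- k2 * t)"
        by (rule mult_right_mono[OF m2]) simp
      moreover have "(B2 - C2) * exp (- k2 * t) < e / 2" using T2(2) t by auto
      ultimately have a2: "snd (x t) - C2 < e / 2" using key2[OF sol t0] by linarith
      have nn: "fst (x t) \<ge> 0" "snd (x t) \<ge> 0" using inO[OF sol t0] by (auto simp: \<Omega>_def)
      define p where "p = (min (fst (x t)) C1, min (snd (x t)) C2)"
      have pP: "p \<in> P" using nn pos unfolding p_def P_def by auto
      have "dist p (x t) = norm (x t - p)" by (simp add: dist_norm norm_minus_commute)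
      also have "x t - p = (fst (x t) - min (fst (x t)) C1, snd (x t) - min (snd (x t)) C2)"
        by (simp add: p_def prod_eq_iff)
      also have "norm \<dots> \<le> norm (fst (x t) - min (fst (x t)) C1) + norm (snd (x t) - min (snd (x t)) C2)"
        by (rule norm_Pair_le)
      also have "\<dots> < e" using a1 a2 e(1) by (auto simp: min_def)
      finally have "x t \<in> ball p e" by (simp add: mem_ball)
      then show "x t \<in> U" using e pP by blast
    qed
  qed
qed

end
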